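(* Let $C\subset\mathbb{R}^n$ be a pointed, $n$-dimensional closed convex cone and let $K$ be a $C$-pseudo-cone. Then the Gaussian surface area measure $S_{\gamma^{n}}(K,\cdot)$ is a finite measure on $\Omega=S^{n-1}\cap\operatorname{int}C^{\circ}$.
   Context: $C^{\circ}=\{x:\langle x,y\rangle\le 0\ \forall y\in C\}$. A pseudo-cone is a nonempty closed convex set $K$ with $o\notin K$ and $\lambda K\subseteq K$ for $\lambda\ge1$; it is a $C$-pseudo-cone if its recession cone $\{z:K+z\subseteq K\}$ equals $C$. For Borel $\eta\subset\Omega$, $S_{\gamma^n}(K,\eta)=(2\pi)^{-n/2}\int_{\nu_K^{-1}(\eta)}e^{-|x|^2/2}d\mathcal{H}^{n-1}(x)$, where $\nu_K^{-1}(\eta)$ is the set of boundary points of $K$ with an outer unit normal in $\eta$. *)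

theory Defs
  imports "HOL-Analysis.Analysis"
begin

definition polar_cone :: "'a::euclidean_space set \<Rightarrow> 'a set" where
  "polar_cone C = {x. \<forall>y\<in>C. inner x y \<le> 0}"

definition recession_cone :: "'a::euclidean_space set \<Rightarrow> 'a set" where
  "recession_cone K = {z. \<forall>x\<in>K. x + z \<in> K}"

definition pointed_cone :: "'a::euclidean_space set \<Rightarrow> bool" where
  "pointed_cone C \<longleftrightarrow> C \<inter> uminus ` C = {0}"

definition pseudo_cone :: "'a::euclidean_space set \<Rightarrow> bool" where
  "pseudo_cone K \<longleftrightarrow> K \<noteq> {} \<and> closed K \<and> convex K \<and> 0 \<notin> K \<and>
     (\<forall>t::real. t \<ge> 1 \<longrightarrow> (\<forall>x\<in>K. t *\<^sub>R x \<in> K))"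

definition C_pseudo_cone :: "'a::euclidean_space set \<Rightarrow> 'a set \<Rightarrow> bool" where
  "C_pseudo_cone C K \<longleftrightarrow> pseudo_cone K \<and> recession_cone K = C"

definition outer_unit_normal :: "'a::euclidean_space set \<Rightarrow> 'a \<Rightarrow> 'a \<Rightarrow> bool" where
  "outer_unit_normal K x u \<longleftrightarrow> norm u = 1 \<and> (\<forall>y\<in>K. inner (y - x) u \<le> 0)"

definition rev_spherical_image :: "'a::euclidean_space set \<Rightarrow> 'a set \<Rightarrow> 'a set" where
  "rev_spherical_image K \<eta> = {x \<in> frontier K. \<exists>u\<in>\<eta>. outer_unit_normal K x u}"

definition hausdorff_omega :: "nat \<Rightarrow> real" where
  "hausdorff_omega s = pi powr (real s / 2) / Gamma (real s / 2 + 1)"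

definition hausdorff_outer :: "nat \<Rightarrow> 'a::euclidean_space set \<Rightarrow> ennreal" where
  "hausdorff_outer s A =
     (SUP \<delta>\<in>{0<..}. INF U\<in>{U :: nat \<Rightarrow> 'a set. A \<subseteq> (\<Union>i. U i) \<and> (\<forall>i. diameter (U i) \<le> \<delta>)}.
        (\<Sum>i. ennreal (if U i = {} then 0 else hausdorff_omega s * (diameter (U i) / 2) ^ s)))"

definition hausdorff_measure :: "nat \<Rightarrow> 'a::euclidean_space measure" where
  "hausdorff_measure s = measure_of UNIV
     {A. \<forall>T. hausdorff_outer s T = hausdorff_outer s (T \<inter> A) + hausdorff_outer s (T - A)}
     (hausdorff_outer s)"

definition gauss_surface_area :: "'a::euclidean_space set \<Rightarrow> 'a set \<Rightarrow> ennreal" where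
  "gauss_surface_area K \<eta> =
     ennreal ((2 * pi) powr (- real DIM('a) / 2)) *
     (\<integral>\<^sup>+ x. indicator (rev_spherical_image K \<eta>) x * ennreal (exp (- (norm x)\<^sup>2 / 2))
        \<partial>hausdorff_measure (DIM('a) - 1))"

end

theory Submission
  imports Defs
begin


lemma hausdorff_outer_le:
  fixes X :: "'a::euclidean_space set"
  assumes "\<And>\<delta>::real. \<delta> > 0 \<Longrightarrow> \<exists>U. X \<subseteq> (\<Union>i. U i) \<and> (\<forall>i. diameter (U i) \<le> \<delta>) \<and>
     (\<Sum>i. ennreal (if U i = {} then 0 else hausdorff_omega s * (diameter (U i) / 2) ^ s)) \<le> B"
  shows "hausdorff_outer s X \<le> B"
  unfolding hausdorff_outer_def
proof (rule SUP_least)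
  fix \<delta> :: real assume "\<delta> \<in> {0<..}"
  then obtain U where U: "X \<subseteq> (\<Union>i. U i)" "\<forall>i. diameter (U i) \<le> \<delta>"
     "(\<Sum>i. ennreal (if U i = {} then 0 else hausdorff_omega s * (diameter (U i) / 2) ^ s)) \<le> B"
    using assms by force
  show "(INF U\<in>{U :: nat \<Rightarrow> 'a set. X \<subseteq> (\<Union>i. U i) \<and> (\<forall>i. diameter (U i) \<le> \<delta>)}.
        (\<Sum>i. ennreal (if U i = {} then 0 else hausdorff_omega s * (diameter (U i) / 2) ^ s))) \<le> B"
    by (rule INF_lower2[of U]) (use U in auto)
qed

lemma grid_idx:
  fixes z :: real
  assumes "0 \<le> z" "z \<le> real k" "k \<ge> 1"
  shows "\<exists>j<k. real j \<le> z \<and> z \<le> real j + 1"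
proof (cases "z = real k")
  case True
  then show ?thesis using assms by (intro exI[of _ "k - 1"]) (auto simp: of_nat_diff)
next
  case False
  then have zk: "z < real k" using assms by auto
  define j where "j = nat \<lfloor>z\<rfloor>"
  have "real j \<le> z" using assms unfolding j_def by linarith
  moreover have "z \<le> real j + 1" unfolding j_def using assms by linarith
  moreover have "\<lfloor>z\<rfloor> < int k" using zk by (simp add: floor_less_iff)
  then have "j < k" unfolding j_def by (subst nat_less_iff) (use assms in auto)
  ultimately show ?thesis by blast
qed

lemma cell_norm:
  fixes y z :: "'a::euclidean_space"
  assumes b: "b \<in> Basis" and eq: "y \<bullet> b = z \<bullet> b" and h: "0 \<le> h"
    and le: "\<And>c. c \<in> Basis - {b} \<Longrightarrow> \<bar>y \<bullet> c - z \<bullet> c\<bar> \<le> h"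
  shows "norm (y - z) \<le> sqrt (real (DIM('a) - 1)) * h"
proof -
  have "(norm (y - z))\<^sup>2 = (y - z) \<bullet> (y - z)"
    by (simp add: dot_square_norm)
  also have "\<dots> = (\<Sum>c\<in>Basis. ((y - z) \<bullet> c) * ((y - z) \<bullet> c))"
    by (rule euclidean_inner)
  also have "\<dots> = (\<Sum>c\<in>Basis. ((y - z) \<bullet> c)\<^sup>2)"
    by (simp add: power2_eq_square)
  also have "\<dots> = (\<Sum>c\<in>Basis - {b}. ((y - z) \<bullet> c)\<^sup>2)"
    using b eq by (subst sum.remove[of _ b]) (auto simp: inner_diff_left)
  also have "\<dots> \<le> real (card (Basis - {b})) * h\<^sup>2"
  proof (rule sum_bounded_above)
    fix c assume "c \<in> Basis - {b}"
    then have "\<bar>(y - z) \<bullet> c\<bar> \<le> h" using le by (simp add: inner_diff_left)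
    then show "((y - z) \<bullet> c)\<^sup>2 \<le> h\<^sup>2"
      by (metis abs_ge_zero power2_abs power_mono)
  qed
  also have "card (Basis - {b}) = DIM('a) - 1" using b by (simp add: card_Diff_singleton)
  finally have "(norm (y - z))\<^sup>2 \<le> (sqrt (real (DIM('a) - 1)) * h)\<^sup>2"
    by (simp add: power_mult_distrib)
  then show ?thesis using h by (meson power2_le_imp_le mult_nonneg_nonneg real_sqrt_ge_zero of_nat_0_le_iff)
qed


lemma normal_point_proj:
  fixes K :: "'a::euclidean_space set"
  assumes "closed K" "convex K" "x \<in> K" "\<forall>y\<in>K. inner (y - x) u \<le> 0" "0 \<le> t"
  shows "closest_point K (x + t *\<^sub>R u) = x"
proof -
  have "\<forall>z\<in>K. dist (x + t *\<^sub>R u) x \<le> dist (x + t *\<^sub>R u) z"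
  proof
    fix z assume z: "z \<in> K"
    have "inner (z - x) u \<le> 0" using assms(4) z by blast
    then have i: "0 \<le> inner (x - z) u"
      by (simp add: inner_diff_left)
    have "(dist (x + t *\<^sub>R u) z)\<^sup>2 = (norm ((x - z) + t *\<^sub>R u))\<^sup>2"
      by (simp add: dist_norm algebra_simps)
    also have "\<dots> = (norm (x - z))\<^sup>2 + 2 * t * inner (x - z) u + (norm (t *\<^sub>R u))\<^sup>2"
      unfolding power2_norm_eq_inner by (simp add: inner_add_left inner_add_right inner_commute[of u "x-z"] distrib_left)
    also have "\<dots> \<ge> (norm (t *\<^sub>R u))\<^sup>2" using i assms(5) by simp
    also have "norm (t *\<^sub>R u) = dist (x + t *\<^sub>R u) x" by (simp add: dist_norm)
    finally show "dist (x + t *\<^sub>R u) x \<le> dist (x + t *\<^sub>R u) z"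
      using power2_le_imp_le zero_le_dist by blast
  qed
  from closest_point_unique[OF assms(2,1,3) this] show ?thesis by simp
qed

lemma cube_frontier:
  fixes y :: "'a::euclidean_space"
  assumes "y \<in> frontier (cbox (-(R *\<^sub>R One)) (R *\<^sub>R One))"
  shows "\<exists>b\<in>Basis. (y \<bullet> b = R \<or> y \<bullet> b = -R) \<and> (\<forall>c\<in>Basis. \<bar>y \<bullet> c\<bar> \<le> R)"
proof -
  have 1: "y \<in> cbox (-(R *\<^sub>R One)) (R *\<^sub>R One)" "y \<notin> box (-(R *\<^sub>R One)) (R *\<^sub>R One)"
    using assms by (auto simp: frontier_def)
  from 1(1) have c: "\<forall>c\<in>Basis. -R \<le> y \<bullet> c \<and> y \<bullet> c \<le> R" by (simp add: mem_box)
  from 1(2) obtain b where b: "b\<in>Basis" "\<not> (-R < y \<bullet> b \<and> y \<bullet> b < R)" by (auto simp: mem_box)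
  show ?thesis
  proof (intro bexI[OF _ b(1)] conjI)
    show "y \<bullet> b = R \<or> y \<bullet> b = -R" using b c by force
    show "\<forall>c\<in>Basis. \<bar>y \<bullet> c\<bar> \<le> R" using c by (force simp add: abs_le_iff)
  qed
qed



lemma geo_bound:
  fixes K :: "'a::euclidean_space set"
  assumes K: "closed K" "convex K" "K \<noteq> {}" and R: "R \<ge> 1"
    and X: "X \<subseteq> {x\<in>frontier K. \<exists>u. outer_unit_normal K x u} \<inter> cball 0 R"
  shows "hausdorff_outer (DIM('a)-1) X \<le> ennreal (2 * real DIM('a) * hausdorff_omega (DIM('a)-1) * (R * sqrt (real (DIM('a)-1)))^(DIM('a)-1))"
proof (rule hausdorff_outer_le)
  fix \<delta> :: real assume \<delta>: "\<delta> > 0"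
  define s where "s = DIM('a) - 1"
  define k :: nat where "k = nat \<lceil>2 * R * sqrt s / \<delta>\<rceil> + 1"
  have k1: "k \<ge> 1" by (simp add: k_def)
  have "2 * R * sqrt s / \<delta> \<le> real k" unfolding k_def by linarith
  then have "2 * R * sqrt s \<le> real k * \<delta>" using \<delta> by (simp add: divide_le_eq)
  define d where "d = 2 * R * sqrt s / real k"
  have d0: "0 \<le> d" using R k1 by (simp add: d_def)
  have d\<delta>: "d \<le> \<delta>" using \<open>2 * R * sqrt s \<le> real k * \<delta>\<close> k1 unfolding d_def
    by (simp add: divide_le_eq mult.commute)
  define lo where "lo j = -R + 2 * R * real j / real k" for j :: nat
  define cell where "cell = (\<lambda>(b, \<sigma>, J). {y::'a. y \<bullet> b = (if \<sigma> then R else -R) \<and>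
       (\<forall>c\<in>Basis-{b}. lo (J c) \<le> y \<bullet> c \<and> y \<bullet> c \<le> lo (J c + 1))})"
  define I where "I = (SIGMA b:(Basis::'a set). (UNIV::bool set) \<times> (PiE (Basis - {b}) (\<lambda>_. {..<k})))"
  have finI: "finite I" unfolding I_def by (intro finite_SigmaI finite_cartesian_product finite_PiE) auto
  have cardI: "card I = DIM('a) * (2 * k ^ s)"
  proof -
    have "card I = (\<Sum>b\<in>(Basis::'a set). card ((UNIV::bool set) \<times> (PiE (Basis - {b}) (\<lambda>_. {..<k}))))"
      unfolding I_def by (rule card_SigmaI) (auto intro!: finite_cartesian_product finite_PiE)
    also have "\<dots> = (\<Sum>b\<in>(Basis::'a set). 2 * k ^ s)"
    proof (rule sum.cong[OF refl])
      fix b :: 'a assume "b \<in> Basis"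
      then show "card ((UNIV::bool set) \<times> (PiE (Basis - {b}) (\<lambda>_. {..<k}))) = 2 * k ^ s"
        by (simp add: card_cartesian_product card_PiE s_def card_Diff_singleton)
    qed
    finally show ?thesis by simp
  qed
  obtain e where e: "bij_betw e {0..<card I} I" using ex_bij_betw_nat_finite[OF finI] by blast
  define p where "p = closest_point K"
  define U where "U i = (if i < card I then p ` cell (e i) else {})" for i
  have diamU: "norm (a - a') \<le> d" if "a \<in> U i" "a' \<in> U i" for i a a'
  proof -
    from that have i: "i < card I" by (auto simp: U_def split: if_splits)
    then have "e i \<in> I" using e by (auto simp: bij_betw_def)
    then obtain b \<sigma> J where eq: "e i = (b, \<sigma>, J)" and b: "b \<in> Basis" and J: "J \<in> PiE (Basis - {b}) (\<lambda>_. {..<k})"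
      unfolding I_def by auto
    from that i obtain y z where y: "y \<in> cell (b, \<sigma>, J)" "a = p y" and z: "z \<in> cell (b, \<sigma>, J)" "a' = p z"
      by (auto simp: U_def eq)
    have "norm (y - z) \<le> sqrt (real (DIM('a) - 1)) * (2 * R / real k)"
    proof (rule cell_norm[OF b])
      show "y \<bullet> b = z \<bullet> b" using y z by (simp add: cell_def)
      show "0 \<le> 2 * R / real k" using R by simp
      fix c assume c: "c \<in> Basis - {b}"
      have "lo (J c + 1) - lo (J c) = 2 * R / real k" by (simp add: lo_def add_divide_distrib algebra_simps)
      then show "\<bar>y \<bullet> c - z \<bullet> c\<bar> \<le> 2 * R / real k" using y(1) z(1) c
        unfolding cell_def by (simp, smt (verit))
    qed
    also have "\<dots> = d" by (simp add: d_def s_def)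
    finally have "dist y z \<le> d" by (simp add: dist_norm)
    then have "dist a a' \<le> d" using closest_point_lipschitz[OF K(2,1,3), of y z] y z p_def by simp
    then show ?thesis by (simp add: dist_norm)
  qed
  have diamle: "diameter (U i) \<le> d" for i
    by (rule diameter_le) (use d0 diamU in auto)
  have termle: "ennreal (if U i = {} then 0 else hausdorff_omega s * (diameter (U i) / 2) ^ s)
       \<le> ennreal (hausdorff_omega s * (d / 2) ^ s)" for i
  proof (cases "U i = {}")
    case False
    then obtain a0 where a0: "a0 \<in> U i" by auto
    have "bounded (U i)" unfolding bounded_def
      by (rule exI[of _ a0], rule exI[of _ d]) (use a0 diamU in \<open>auto simp: dist_norm\<close>)
    then have "0 \<le> diameter (U i)" by (rule diameter_ge_0)
    moreover have "0 \<le> hausdorff_omega s" unfolding hausdorff_omega_def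
      by (intro divide_nonneg_pos Gamma_real_pos) auto
    ultimately show ?thesis using False diamle[of i]
      by (auto intro!: ennreal_leI mult_left_mono power_mono)
  qed simp
  show "\<exists>U. X \<subseteq> (\<Union>i. U i) \<and> (\<forall>i. diameter (U i) \<le> \<delta>) \<and>
     (\<Sum>i. ennreal (if U i = {} then 0 else hausdorff_omega (DIM('a)-1) * (diameter (U i) / 2) ^ (DIM('a)-1)))
     \<le> ennreal (2 * real DIM('a) * hausdorff_omega (DIM('a)-1) * (R * sqrt (real (DIM('a)-1)))^(DIM('a)-1))"
  proof (intro exI[of _ U] conjI)
    show "\<forall>i. diameter (U i) \<le> \<delta>" using diamle d\<delta> by (meson order_trans)
    have "(\<Sum>i. ennreal (if U i = {} then 0 else hausdorff_omega s * (diameter (U i) / 2) ^ s))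
        = (\<Sum>i<card I. ennreal (if U i = {} then 0 else hausdorff_omega s * (diameter (U i) / 2) ^ s))"
      by (rule suminf_finite) (auto simp: U_def)
    also have "\<dots> \<le> (\<Sum>i<card I. ennreal (hausdorff_omega s * (d / 2) ^ s))"
      by (rule sum_mono) (rule termle)
    also have "\<dots> = ennreal (real (card I) * (hausdorff_omega s * (d / 2) ^ s))"
      by (simp add: ennreal_of_nat_eq_real_of_nat) (simp add: ennreal_mult')
    also have "real (card I) * (hausdorff_omega s * (d / 2) ^ s)
        = 2 * real DIM('a) * hausdorff_omega s * (R * sqrt (real s))^s"
    proof -
      have "real (card I) * (d / 2) ^ s = 2 * real DIM('a) * (real k ^ s * (R * sqrt s / real k) ^ s)"
        by (simp add: cardI d_def)
      also have "real k ^ s * (R * sqrt s / real k) ^ s = (R * sqrt s) ^ s"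
        using k1 by (simp add: power_divide)
      finally show ?thesis by (simp add: algebra_simps)
    qed
    finally show "(\<Sum>i. ennreal (if U i = {} then 0 else hausdorff_omega (DIM('a)-1) * (diameter (U i) / 2) ^ (DIM('a)-1)))
     \<le> ennreal (2 * real DIM('a) * hausdorff_omega (DIM('a)-1) * (R * sqrt (real (DIM('a)-1)))^(DIM('a)-1))"
      by (simp only: s_def)
    show "X \<subseteq> (\<Union>i. U i)"
    proof
      fix x assume "x \<in> X"
      then have "x \<in> frontier K" "\<exists>u. outer_unit_normal K x u" "x \<in> cball 0 R" using X by blast+
      then obtain u where xf: "x \<in> frontier K" and nu: "outer_unit_normal K x u" and xR: "norm x \<le> R"
        by auto
      from nu have u1: "norm u = 1" and un: "\<forall>y\<in>K. inner (y - x) u \<le> 0"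
        by (auto simp: outer_unit_normal_def)
      have xK: "x \<in> K" using xf frontier_subset_closed[OF K(1)] by auto
      define Q where "Q = cbox (-(R *\<^sub>R One)) (R *\<^sub>R (One::'a))"
      have "\<forall>i\<in>Basis. \<bar>x \<bullet> i\<bar> \<le> R" by (metis Basis_le_norm order_trans xR)
      then have xQ: "x \<in> Q" unfolding Q_def mem_box by (auto simp: abs_le_iff)
      obtain B where B: "\<forall>y\<in>Q. norm y \<le> B" using bounded_cbox bounded_iff Q_def by metis
      have "norm x \<le> B" using B xQ by blast
      define L where "L = B + R + 1"
      have L0: "L \<ge> 0" using \<open>norm x \<le> B\<close> R norm_ge_zero[of x] unfolding L_def by linarith
      define w where "w = x + L *\<^sub>R u"
      have "L = norm (w - x)" using u1 L0 by (simp add: w_def)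
      also have "\<dots> \<le> norm w + norm x" by (rule norm_triangle_ineq4)
      finally have "norm w > B" using xR unfolding L_def by linarith
      then have wQ: "w \<notin> Q" using B by force
      have "closed_segment x w \<inter> frontier Q \<noteq> {}"
        by (rule connected_Int_frontier) (use xQ wQ in auto)
      then obtain y where y: "y \<in> closed_segment x w" "y \<in> frontier Q" by blast
      from y(1) obtain \<theta> :: real where th: "0 \<le> \<theta>" "\<theta> \<le> 1" "y = (1 - \<theta>) *\<^sub>R x + \<theta> *\<^sub>R w"
        by (auto simp: closed_segment_def)
      have yeq: "y = x + (\<theta> * L) *\<^sub>R u" using th(3) by (simp add: w_def algebra_simps)
      have py: "p y = x" unfolding p_def yeq
        by (rule normal_point_proj[OF K(1,2) xK un]) (use th L0 in simp)
      obtain b where b: "b \<in> Basis" "y \<bullet> b = R \<or> y \<bullet> b = -R" and yc: "\<forall>c\<in>Basis. \<bar>y \<bullet> c\<bar> \<le> R"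
        using cube_frontier[of y R] y(2) unfolding Q_def by blast
      define \<sigma> where "\<sigma> = (y \<bullet> b = R)"
      have yb: "y \<bullet> b = (if \<sigma> then R else -R)" using b(2) \<sigma>_def by auto
      have "\<forall>c\<in>Basis-{b}. \<exists>j. j < k \<and> lo j \<le> y \<bullet> c \<and> y \<bullet> c \<le> lo (j + 1)"
      proof
        fix c assume c: "c \<in> Basis - {b}"
        define z where "z = (y \<bullet> c + R) * real k / (2 * R)"
        have ycR: "\<bar>y \<bullet> c\<bar> \<le> R" using yc c by blast
        have z0: "0 \<le> z" unfolding z_def using ycR R by (intro divide_nonneg_pos mult_nonneg_nonneg) auto
        have "(y \<bullet> c + R) * real k \<le> (2 * R) * real k" using ycR by (intro mult_right_mono) auto
        then have zk: "z \<le> real k" unfolding z_def using R by (simp add: divide_le_eq mult.commute)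
        obtain j where j: "j < k" "real j \<le> z" "z \<le> real j + 1" using grid_idx[OF z0 zk k1] by blast
        have ycz: "y \<bullet> c = -R + 2 * R * z / real k" using R k1 by (simp add: z_def field_simps)
        have "2 * R * real j / real k \<le> 2 * R * z / real k"
          using j R by (intro divide_right_mono mult_left_mono) auto
        moreover have "2 * R * z / real k \<le> 2 * R * (real j + 1) / real k"
          using j R by (intro divide_right_mono mult_left_mono) auto
        ultimately have "lo j \<le> y \<bullet> c \<and> y \<bullet> c \<le> lo (j + 1)"
          unfolding lo_def ycz by (simp add: add.commute)
        then show "\<exists>j. j < k \<and> lo j \<le> y \<bullet> c \<and> y \<bullet> c \<le> lo (j + 1)" using j by blast
      qed
      then obtain Jf where Jf: "\<forall>c\<in>Basis-{b}. Jf c < k \<and> lo (Jf c) \<le> y \<bullet> c \<and> y \<bullet> c \<le> lo (Jf c + 1)"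
        by metis
      define J where "J = restrict Jf (Basis - {b})"
      have JI: "(b, \<sigma>, J) \<in> I" unfolding I_def J_def using b Jf by auto
      have ycell: "y \<in> cell (b, \<sigma>, J)" unfolding cell_def J_def using yb Jf by auto
      have "(b, \<sigma>, J) \<in> e ` {0..<card I}" using e JI by (simp add: bij_betw_def)
      then obtain i where i: "i < card I" "e i = (b, \<sigma>, J)" by auto
      then have "x \<in> U i" unfolding U_def using ycell py by auto
      then show "x \<in> (\<Union>i. U i)" by blast
    qed
  qed
qed



lemma pow_le_exp:
  fixes x :: real assumes "0 \<le> x"
  shows "x ^ s \<le> (real s + 1) ^ s * exp x"
proof -
  define m where "m = real s + 1"
  have m: "m > 0" by (simp add: m_def)
  have "x / m \<le> exp (x / m)" using exp_ge_add_one_self[of "x/m"] by linarith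
  then have "(x / m) ^ s \<le> exp (x / m) ^ s" using assms m by (intro power_mono) auto
  also have "\<dots> = exp (real s * (x / m))" by (rule exp_of_nat_mult[symmetric])
  also have "\<dots> \<le> exp x"
  proof -
    have "real s * (x / m) \<le> m * (x / m)" using assms m by (intro mult_right_mono) (auto simp: m_def)
    also have "\<dots> = x" using m by simp
    finally show ?thesis by simp
  qed
  finally have "(x / m) ^ s \<le> exp x" .
  then have "m ^ s * (x / m) ^ s \<le> m ^ s * exp x" using m by (intro mult_left_mono) auto
  moreover have "m ^ s * (x / m) ^ s = x ^ s" using m by (simp add: power_divide)
  ultimately have "x ^ s \<le> m ^ s * exp x" by linarith
  then show ?thesis by (simp add: m_def)
qed

lemma gauss_summable:
  fixes C :: real assumes C: "0 \<le> C"
  shows "summable (\<lambda>j::nat. exp (-(real j)\<^sup>2/2) * (C * (real j + 1) ^ s))"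
proof (rule summable_comparison_test')
  define D where "D = C * (real s + 1) ^ s * exp 5"
  show "summable (\<lambda>j::nat. D * exp (-1) ^ j)"
    by (intro summable_mult summable_geometric) simp
  fix j :: nat
  have "(real j + 1) ^ s \<le> (real s + 1) ^ s * exp (real j + 1)" by (rule pow_le_exp) simp
  then have "exp (-(real j)\<^sup>2/2) * (C * (real j + 1) ^ s) \<le>
      exp (-(real j)\<^sup>2/2) * (C * ((real s + 1) ^ s * exp (real j + 1)))"
    using C by (intro mult_left_mono) auto
  also have "\<dots> = C * (real s + 1) ^ s * (exp (-(real j)\<^sup>2/2) * exp (real j + 1))"
    by (simp add: algebra_simps)
  also have "\<dots> = C * (real s + 1) ^ s * exp (-(real j)\<^sup>2/2 + (real j + 1))"
    by (simp only: exp_add)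
  also have "\<dots> \<le> C * (real s + 1) ^ s * exp (5 + real j * (-1))"
  proof -
    have "0 \<le> ((real j) - 2)\<^sup>2" by simp
    then have "-(real j)\<^sup>2/2 + (real j + 1) \<le> 5 + real j * (-1)"
      by (simp add: power2_eq_square algebra_simps)
    then show ?thesis using C by (intro mult_left_mono) auto
  qed
  also have "exp (5 + real j * (-1)) = exp 5 * exp (-1) ^ j"
    by (simp only: exp_add exp_of_nat_mult)
  also have "C * (real s + 1) ^ s * (exp 5 * exp (-1) ^ j) = D * exp (-1) ^ j"
    by (simp add: D_def)
  finally show "norm (exp (-(real j)\<^sup>2/2) * (C * (real j + 1) ^ s)) \<le> D * exp (-1) ^ j"
    using C by simp
qed



theorem lemma3p1:
  fixes C K :: "'a::euclidean_space set"
  assumes "closed C" and "convex_cone C"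
    and "pointed_cone C"
    and "interior C \<noteq> {}"
    and "C_pseudo_cone C K"
  shows "gauss_surface_area K (sphere 0 1 \<inter> interior (polar_cone C)) < \<infinity>"
proof -
  from assms(5) have K: "closed K" "convex K" "K \<noteq> {}"
    by (auto simp: C_pseudo_cone_def pseudo_cone_def)
  define \<Omega> where "\<Omega> = sphere (0::'a) 1 \<inter> interior (polar_cone C)"
  define A where "A = rev_spherical_image K \<Omega>"
  have A: "A \<subseteq> {x\<in>frontier K. \<exists>u. outer_unit_normal K x u}"
    by (auto simp: A_def rev_spherical_image_def)
  define s where "s = DIM('a) - 1"
  define M where "M = (hausdorff_measure s :: 'a measure)"
  define C0 where "C0 = 2 * real DIM('a) * hausdorff_omega s * sqrt (real s) ^ s"
  have C00: "0 \<le> C0" unfolding C0_def hausdorff_omega_def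
    by (intro mult_nonneg_nonneg divide_nonneg_pos Gamma_real_pos) auto
  define t where "t j = exp (-(real j)\<^sup>2/2)" for j :: nat
  define a where "a j = t j * (C0 * (real j + 1) ^ s)" for j
  have suma: "summable a" unfolding a_def t_def by (rule gauss_summable[OF C00])
  have a0: "0 \<le> a j" for j unfolding a_def t_def using C00 by simp
  define f where "f x = indicator A x * ennreal (exp (-(norm x)\<^sup>2/2))" for x
  have space: "space M = UNIV" by (simp add: M_def hausdorff_measure_def space_measure_of_conv)
  have em: "emeasure M L \<le> hausdorff_outer s L" for L
    unfolding M_def hausdorff_measure_def emeasure_measure_of_conv by auto
  have geo: "hausdorff_outer s X \<le> ennreal (C0 * R ^ s)"
    if "R \<ge> 1" "X \<subseteq> A \<inter> cball 0 R" for X R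
  proof -
    have "hausdorff_outer (DIM('a)-1) X \<le> ennreal (2 * real DIM('a) * hausdorff_omega (DIM('a)-1) * (R * sqrt (real (DIM('a)-1)))^(DIM('a)-1))"
      by (rule geo_bound[OF K that(1)]) (use that A in blast)
    also have "2 * real DIM('a) * hausdorff_omega (DIM('a)-1) * (R * sqrt (real (DIM('a)-1)))^(DIM('a)-1) = C0 * R ^ s"
      by (simp add: C0_def s_def power_mult_distrib)
    finally show ?thesis by (simp add: s_def)
  qed
  have key: "integral\<^sup>S M g \<le> ennreal (\<Sum>j. a j)" if g: "simple_function M g" "g \<le> f" for g
  proof -
    have gm: "g \<in> borel_measurable M" by (rule borel_measurable_simple_function[OF g(1)])
    define E where "E j = {x. ennreal (t (Suc j)) < g x}" for j
    have Emeas: "E j \<in> sets M" for j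
    proof -
      have "{x\<in>space M. ennreal (t (Suc j)) < g x} \<in> sets M" using gm by measurable
      then show ?thesis by (simp add: E_def space)
    qed
    have gf: "g x \<le> f x" for x using g(2) by (simp add: le_fun_def)
    have fle: "f x \<le> ennreal (exp (-(norm x)\<^sup>2/2))" for x
      by (simp add: f_def indicator_def)
    have fA: "x \<in> A" if "f x \<noteq> 0" for x using that by (simp add: f_def indicator_def split: if_splits)
    have EM: "emeasure M (E j) \<le> ennreal (C0 * (real j + 1) ^ s)" for j
    proof -
      have "E j \<subseteq> A \<inter> cball 0 (real j + 1)"
      proof
        fix x assume "x \<in> E j"
        then have lt: "ennreal (t (Suc j)) < g x" by (simp add: E_def)
        then have "f x \<noteq> 0" using gf[of x] by (metis not_less_zero order_less_le_trans)
        then have "x \<in> A" by (rule fA)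
        have "ennreal (t (Suc j)) < ennreal (exp (-(norm x)\<^sup>2/2))"
          using lt gf[of x] fle[of x] by (meson order_less_le_trans)
        then have "t (Suc j) < exp (-(norm x)\<^sup>2/2)" by (subst (asm) ennreal_less_iff) (auto simp: t_def)
        then have "-(real (Suc j))\<^sup>2/2 < -(norm x)\<^sup>2/2" by (simp add: t_def)
        then have "(norm x)\<^sup>2 < (real j + 1)\<^sup>2" by (simp add: add.commute)
        then have "norm x < real j + 1" by (rule power2_less_imp_less) simp
        then show "x \<in> A \<inter> cball 0 (real j + 1)" using \<open>x \<in> A\<close> by simp
      qed
      then have "hausdorff_outer s (E j) \<le> ennreal (C0 * (real j + 1) ^ s)"
        by (intro geo) auto
      then show ?thesis using em[of "E j"] by (meson order_trans)
    qed
    have gle: "g x \<le> (\<Sum>j. ennreal (t j) * indicator (E j) x)" for x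
    proof (cases "g x = 0")
      case True then show ?thesis by simp
    next
      case False
      then have gpos: "0 < g x" by (simp add: zero_less_iff_neq_zero)
      have t0: "t 0 = 1" by (simp add: t_def)
      have "ennreal (exp (-(norm x)\<^sup>2/2)) \<le> ennreal 1" by (intro ennreal_leI) simp
      then have gx1: "g x \<le> ennreal (t 0)" using gf[of x] fle[of x] t0 by (metis order_trans)
      then have "g x < top" using t0 by (metis ennreal_less_top le_less_trans)
      define v where "v = enn2real (g x)"
      have gv: "g x = ennreal v" unfolding v_def using \<open>g x < top\<close> by (simp add: ennreal_enn2real)
      have v0: "0 < v" using gpos gv by simp
      have ex: "\<exists>m. ennreal (t m) < g x"
      proof
        define j0 where "j0 = nat \<lceil>-2 * ln v\<rceil> + 1"
        have j1: "1 \<le> real j0" by (simp add: j0_def)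
        have "real j0 \<le> (real j0)\<^sup>2" using j1 by (simp add: power2_eq_square)
        then have A1: "t j0 \<le> exp (- real j0 / 2)" by (simp add: t_def)
        have "-2 * ln v \<le> real (nat \<lceil>-2 * ln v\<rceil>)" by (rule real_nat_ceiling_ge)
        then have "- real j0 / 2 < ln v" unfolding j0_def by simp
        then have "exp (- real j0 / 2) < exp (ln v)" by simp
        then have "exp (- real j0 / 2) < v" using v0 by simp
        then have "t j0 < v" using A1 by linarith
        then show "ennreal (t j0) < g x" unfolding gv using v0 by (subst ennreal_less_iff) (auto simp: t_def)
      qed
      define m where "m = (LEAST m. ennreal (t m) < g x)"
      have m: "ennreal (t m) < g x" unfolding m_def by (rule LeastI_ex[OF ex])
      have "m \<noteq> 0" using m gx1 by (metis leD)
      define j where "j = m - 1"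
      have jm: "Suc j = m" using \<open>m \<noteq> 0\<close> by (simp add: j_def)
      have "\<not> ennreal (t j) < g x" unfolding j_def m_def
        by (rule not_less_Least) (use \<open>m \<noteq> 0\<close> m_def in simp)
      then have gtj: "g x \<le> ennreal (t j)" by simp
      have sum1: "(\<Sum>i\<in>{j}. F i) = F j" for F :: "nat \<Rightarrow> ennreal" and j by simp
      have "x \<in> E j" using m jm by (simp add: E_def)
      then have "g x \<le> ennreal (t j) * indicator (E j) x" using gtj by simp
      also have "\<dots> = (\<Sum>i\<in>{j}. ennreal (t i) * indicator (E i) x)" using sum1[of "\<lambda>i. ennreal (t i) * indicator (E i) x" j] by simp
      also have "\<dots> \<le> (\<Sum>i. ennreal (t i) * indicator (E i) x)"
        by (rule sum_le_suminf) auto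
      finally show ?thesis .
    qed
    have "integral\<^sup>S M g = integral\<^sup>N M g" by (rule nn_integral_eq_simple_integral[OF g(1), symmetric])
    also have "\<dots> \<le> integral\<^sup>N M (\<lambda>x. \<Sum>j. ennreal (t j) * indicator (E j) x)"
      by (rule nn_integral_mono) (rule gle)
    also have "\<dots> = (\<Sum>j. integral\<^sup>N M (\<lambda>x. ennreal (t j) * indicator (E j) x))"
      by (rule nn_integral_suminf) (use Emeas in measurable)
    also have "\<dots> = (\<Sum>j. ennreal (t j) * emeasure M (E j))"
      by (simp add: nn_integral_cmult_indicator Emeas)
    also have "\<dots> \<le> (\<Sum>j. ennreal (a j))"
    proof (rule suminf_le)
      fix j
      have "ennreal (t j) * emeasure M (E j) \<le> ennreal (t j) * ennreal (C0 * (real j + 1) ^ s)"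
        by (rule mult_left_mono[OF EM]) simp
      also have "\<dots> = ennreal (a j)" unfolding a_def t_def
        by (simp add: ennreal_mult'[symmetric])
      finally show "ennreal (t j) * emeasure M (E j) \<le> ennreal (a j)" .
    qed auto
    also have "\<dots> = ennreal (\<Sum>j. a j)" by (rule suminf_ennreal2[OF a0 suma])
    finally show ?thesis .
  qed
  have "integral\<^sup>N M f \<le> ennreal (\<Sum>j. a j)"
    unfolding nn_integral_def by (rule SUP_least) (use key in auto)
  then have "ennreal ((2 * pi) powr (- real DIM('a) / 2)) * integral\<^sup>N M f
      \<le> ennreal ((2 * pi) powr (- real DIM('a) / 2)) * ennreal (\<Sum>j. a j)"
    by (rule mult_left_mono) simp
  also have "\<dots> < \<infinity>" by (simp add: ennreal_mult_less_top)
  finally have fin: "ennreal ((2 * pi) powr (- real DIM('a) / 2)) * integral\<^sup>N M f < \<infinity>" .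
  have eq: "gauss_surface_area K \<Omega> = ennreal ((2 * pi) powr (- real DIM('a) / 2)) * integral\<^sup>N M f"
    unfolding gauss_surface_area_def M_def s_def f_def[abs_def] A_def ..
  show ?thesis unfolding \<Omega>_def[symmetric] eq by (rule fin)
qed


end
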